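(* Let $\Phi,\Psi,S,T$ be finite sets and let $p(\varphi)$ on $\Phi$ and $p(\psi)$ on $\Psi$ be fixed probability distributions with full support. Let $\pi:S\times T\times\Phi\to\mathbb{R}$ be a payoff function that depends only on the signals and on the first player's state of nature. Suppose $p(s,t,\varphi,\psi)$ is a state-consistent entangled joint distribution on $S\times T\times\Phi\times\Psi$ that maximizes the expected payoff $\sum_{s,t,\varphi,\psi}\pi(s,t;\varphi)\,p(s,t,\varphi,\psi)$ among all state-consistent entangled joint distributions. Then there exists a state-consistent classically generated joint distribution $\widetilde p(s,t,\varphi,\psi)$ whose expected payoff $\sum_{s,t,\varphi,\psi}\pi(s,t;\varphi)\,\widetilde p(s,t,\varphi,\psi)$ equals this maximal value. That is, the maximal expected payoff achievable with state-consistent entangled signals coincides with the expected payoff of certain state-consistent classically generated signals.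
   Context: Coordination game: player A privately observes a state of nature $\varphi\in\Phi$, player B privately observes $\psi\in\Psi$; $\varphi$ and $\psi$ are independent with joint distribution $p(\varphi,\psi)=p(\varphi)p(\psi)$. Players receive signals $s\in S$ (A) and $t\in T$ (B) and play their signals as actions; the payoff is $\pi(s,t;\varphi)$ and the expected payoff of a joint distribution $q(s,t,\varphi,\psi)$ is $\sum\pi(s,t;\varphi)q(s,t,\varphi,\psi)$. A joint distribution of $(s,t,\varphi,\psi)$ is: state-consistent if its $(\varphi,\psi)$-marginal equals $p(\varphi)p(\psi)$; disjoint if $\Pr\{\psi\mid\varphi,s\}=\Pr\{\psi\mid\varphi\}$ and $\Pr\{\varphi\mid\psi,t\}=\Pr\{\varphi\mid\psi\}$ (whenever the conditioning events have positive probability); classically generated if there exists a random variable $x$ (jointly distributed with $(s,t,\varphi,\psi)$) independent of $(\varphi,\psi)$ such that $p(s,t\mid x,\varphi,\psi)=p(s\mid x,\varphi)\,p(t\mid x,\psi)$; entangled if it is disjoint and not classically generated. *)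

theory Defs
  imports Complex_Main
begin

definition prob_dist :: "('a::finite \<Rightarrow> real) \<Rightarrow> bool" where
  "prob_dist p \<longleftrightarrow> (\<forall>a. 0 \<le> p a) \<and> (\<Sum>a\<in>UNIV. p a) = 1"

definition joint_dist ::
  "('s::finite \<Rightarrow> 't::finite \<Rightarrow> 'phi::finite \<Rightarrow> 'psi::finite \<Rightarrow> real) \<Rightarrow> bool" where
  "joint_dist q \<longleftrightarrow> (\<forall>s t f g. 0 \<le> q s t f g) \<and>
     (\<Sum>s\<in>UNIV. \<Sum>t\<in>UNIV. \<Sum>f\<in>UNIV. \<Sum>g\<in>UNIV. q s t f g) = 1"

definition state_consistent ::
  "('phi::finite \<Rightarrow> real) \<Rightarrow> ('psi::finite \<Rightarrow> real) \<Rightarrow>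
   ('s::finite \<Rightarrow> 't::finite \<Rightarrow> 'phi \<Rightarrow> 'psi \<Rightarrow> real) \<Rightarrow> bool" where
  "state_consistent pA pB q \<longleftrightarrow>
     (\<forall>f g. (\<Sum>s\<in>UNIV. \<Sum>t\<in>UNIV. q s t f g) = pA f * pB g)"

definition marg_phi_psi where "marg_phi_psi q f g = (\<Sum>s\<in>UNIV. \<Sum>t\<in>UNIV. q s t f g)"
definition marg_phi where "marg_phi q f = (\<Sum>s\<in>UNIV. \<Sum>t\<in>UNIV. \<Sum>g\<in>UNIV. q s t f g)"
definition marg_psi where "marg_psi q g = (\<Sum>s\<in>UNIV. \<Sum>t\<in>UNIV. \<Sum>f\<in>UNIV. q s t f g)"
definition marg_s_phi where "marg_s_phi q s f = (\<Sum>t\<in>UNIV. \<Sum>g\<in>UNIV. q s t f g)"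
definition marg_t_psi where "marg_t_psi q t g = (\<Sum>s\<in>UNIV. \<Sum>f\<in>UNIV. q s t f g)"
definition marg_s_phi_psi where "marg_s_phi_psi q s f g = (\<Sum>t\<in>UNIV. q s t f g)"
definition marg_t_phi_psi where "marg_t_phi_psi q t f g = (\<Sum>s\<in>UNIV. q s t f g)"

text \<open>Disjoint: Pr{psi | phi, s} = Pr{psi | phi} and Pr{phi | psi, t} = Pr{phi | psi},
  whenever the conditioning events have positive probability.\<close>
definition disjoint_dist ::
  "('s::finite \<Rightarrow> 't::finite \<Rightarrow> 'phi::finite \<Rightarrow> 'psi::finite \<Rightarrow> real) \<Rightarrow> bool" where
  "disjoint_dist q \<longleftrightarrow>
     (\<forall>s f g. marg_s_phi q s f > 0 \<longrightarrow>
        marg_s_phi_psi q s f g / marg_s_phi q s f = marg_phi_psi q f g / marg_phi q f) \<and>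
     (\<forall>t f g. marg_t_psi q t g > 0 \<longrightarrow>
        marg_t_phi_psi q t f g / marg_t_psi q t g = marg_phi_psi q f g / marg_psi q g)"

text \<open>Classically generated: there is a (finitely valued) random variable x, given by a joint
  pmf r of (x,s,t,phi,psi) supported on x < n whose x-marginal is q, such that x is independent of
  (phi,psi) and p(s,t | x,phi,psi) = p(s | x,phi) p(t | x,psi).\<close>
definition classically_generated ::
  "('s::finite \<Rightarrow> 't::finite \<Rightarrow> 'phi::finite \<Rightarrow> 'psi::finite \<Rightarrow> real) \<Rightarrow> bool" where
  "classically_generated q \<longleftrightarrow>
     (\<exists>(n::nat) (r :: nat \<Rightarrow> 's \<Rightarrow> 't \<Rightarrow> 'phi \<Rightarrow> 'psi \<Rightarrow> real).
        (\<forall>x s t f g. 0 \<le> r x s t f g) \<and>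
        (\<forall>x s t f g. n \<le> x \<longrightarrow> r x s t f g = 0) \<and>
        (\<forall>s t f g. q s t f g = (\<Sum>x<n. r x s t f g)) \<and>
        (\<comment> \<open>x independent of (phi,psi)\<close>
         \<forall>x f g. marg_phi_psi (r x) f g =
                 (\<Sum>s\<in>UNIV. \<Sum>t\<in>UNIV. \<Sum>f'\<in>UNIV. \<Sum>g'\<in>UNIV. r x s t f' g') * marg_phi_psi q f g) \<and>
        (\<comment> \<open>conditional factorisation, whenever p(x,phi,psi) > 0\<close>
         \<forall>x s t f g. marg_phi_psi (r x) f g > 0 \<longrightarrow>
           r x s t f g / marg_phi_psi (r x) f g =
             (marg_s_phi (r x) s f / marg_phi (r x) f) * (marg_t_psi (r x) t g / marg_psi (r x) g)))"

definition entangled ::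
  "('s::finite \<Rightarrow> 't::finite \<Rightarrow> 'phi::finite \<Rightarrow> 'psi::finite \<Rightarrow> real) \<Rightarrow> bool" where
  "entangled q \<longleftrightarrow> disjoint_dist q \<and> \<not> classically_generated q"

definition expected_payoff ::
  "('s::finite \<Rightarrow> 't::finite \<Rightarrow> 'phi::finite \<Rightarrow> real) \<Rightarrow>
   ('s \<Rightarrow> 't \<Rightarrow> 'phi \<Rightarrow> 'psi::finite \<Rightarrow> real) \<Rightarrow> real" where
  "expected_payoff pay q =
     (\<Sum>s\<in>UNIV. \<Sum>t\<in>UNIV. \<Sum>f\<in>UNIV. \<Sum>g\<in>UNIV. pay s t f * q s t f g)"

end

theory Submission
  imports Defs
begin

lemma sum_if_const: "(\<Sum>x\<in>A. if c then h x else (0::real)) = (if c then (\<Sum>x\<in>A. h x) else 0)"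
  by simp

lemma sum_rot3:
  "(\<Sum>a\<in>A. \<Sum>b\<in>B. \<Sum>c\<in>C. h a b c) = (\<Sum>c\<in>C. \<Sum>a\<in>A. \<Sum>b\<in>B. (h a b c::real))"
proof -
  have "(\<Sum>a\<in>A. \<Sum>b\<in>B. \<Sum>c\<in>C. h a b c) = (\<Sum>a\<in>A. \<Sum>c\<in>C. \<Sum>b\<in>B. h a b c)"
    by (rule sum.cong[OF refl], rule sum.swap)
  also have "\<dots> = (\<Sum>c\<in>C. \<Sum>a\<in>A. \<Sum>b\<in>B. h a b c)" by (rule sum.swap)
  finally show ?thesis .
qed

lemma sum_nonneg_zero:
  fixes h :: "'a::finite \<Rightarrow> 'b::finite \<Rightarrow> real"
  assumes "\<forall>a b. 0 \<le> h a b" "(\<Sum>a\<in>UNIV. \<Sum>b\<in>UNIV. h a b) = 0"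
  shows "h a b = 0"
proof -
  have "\<forall>a\<in>UNIV. (\<Sum>b\<in>UNIV. h a b) = 0"
    using assms by (subst sum_nonneg_eq_0_iff[symmetric]) (auto intro: sum_nonneg)
  then have "(\<Sum>b\<in>UNIV. h a b) = 0" by simp
  then show ?thesis using assms(1) by (simp add: sum_nonneg_eq_0_iff)
qed

lemma t_phi_indep:
  fixes pA :: "'phi::finite \<Rightarrow> real" and pB :: "'psi::finite \<Rightarrow> real"
    and p :: "'s::finite \<Rightarrow> 't::finite \<Rightarrow> 'phi \<Rightarrow> 'psi \<Rightarrow> real"
  assumes pA: "prob_dist pA" and pB: "\<forall>g. pB g > 0"
    and nn: "\<forall>s t f g. 0 \<le> p s t f g" and sc: "state_consistent pA pB p"
    and dj: "disjoint_dist p"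
  shows "(\<Sum>s\<in>UNIV. \<Sum>g\<in>UNIV. p s t f g) = pA f * (\<Sum>s\<in>UNIV. \<Sum>f'\<in>UNIV. \<Sum>g\<in>UNIV. p s t f' g)"
proof -
  have mpp: "marg_phi_psi p f' g = pA f' * pB g" for f' g
    using sc by (simp add: marg_phi_psi_def state_consistent_def)
  have mpsi: "marg_psi p g = pB g" for g
  proof -
    have "marg_psi p g = (\<Sum>f\<in>UNIV. \<Sum>s\<in>UNIV. \<Sum>t\<in>UNIV. p s t f g)"
      unfolding marg_psi_def by (rule sum_rot3)
    also have "\<dots> = (\<Sum>f\<in>UNIV. pA f * pB g)"
      using sc by (simp add: state_consistent_def)
    also have "\<dots> = pB g" using pA by (simp add: prob_dist_def sum_distrib_right[symmetric])
    finally show ?thesis .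
  qed
  have tg: "(\<Sum>s\<in>UNIV. p s t f g) = pA f * (\<Sum>s\<in>UNIV. \<Sum>f'\<in>UNIV. p s t f' g)" for g
  proof (cases "marg_t_psi p t g > 0")
    case True
    then have "marg_t_phi_psi p t f g / marg_t_psi p t g = marg_phi_psi p f g / marg_psi p g"
      using dj by (simp add: disjoint_dist_def)
    also have "\<dots> = pA f" using mpp mpsi pB by (simp add: less_imp_neq[symmetric])
    finally have "marg_t_phi_psi p t f g = pA f * marg_t_psi p t g"
      using True by (simp add: divide_eq_eq)
    then show ?thesis by (simp add: marg_t_phi_psi_def marg_t_psi_def)
  next
    case False
    have "marg_t_psi p t g \<ge> 0" unfolding marg_t_psi_def using nn by (simp add: sum_nonneg)
    with False have z: "(\<Sum>s\<in>UNIV. \<Sum>f'\<in>UNIV. p s t f' g) = 0" by (simp add: marg_t_psi_def)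
    have "p s t f' g = 0" for s f'
      using sum_nonneg_zero[of "\<lambda>s f'. p s t f' g", OF _ z] nn by auto
    then show ?thesis by simp
  qed
  have "(\<Sum>s\<in>UNIV. \<Sum>g\<in>UNIV. p s t f g) = (\<Sum>g\<in>UNIV. \<Sum>s\<in>UNIV. p s t f g)"
    by (rule sum.swap)
  also have "\<dots> = (\<Sum>g\<in>UNIV. pA f * (\<Sum>s\<in>UNIV. \<Sum>f'\<in>UNIV. p s t f' g))" using tg by simp
  also have "\<dots> = pA f * (\<Sum>g\<in>UNIV. \<Sum>s\<in>UNIV. \<Sum>f'\<in>UNIV. p s t f' g)"
    by (simp add: sum_distrib_left)
  also have "(\<Sum>g\<in>UNIV. \<Sum>s\<in>UNIV. \<Sum>f'\<in>UNIV. p s t f' g) = (\<Sum>s\<in>UNIV. \<Sum>f'\<in>UNIV. \<Sum>g\<in>UNIV. p s t f' g)"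
    by (rule sum_rot3[symmetric])
  finally show ?thesis .
qed

theorem theorem2:
  fixes pA :: "'phi::finite \<Rightarrow> real" and pB :: "'psi::finite \<Rightarrow> real"
    and pay :: "'s::finite \<Rightarrow> 't::finite \<Rightarrow> 'phi \<Rightarrow> real"
    and p :: "'s \<Rightarrow> 't \<Rightarrow> 'phi \<Rightarrow> 'psi \<Rightarrow> real"
  assumes "prob_dist pA" and "\<forall>f. pA f > 0"
    and "prob_dist pB" and "\<forall>g. pB g > 0"
    and "joint_dist p" and "state_consistent pA pB p" and "entangled p"
    and "\<forall>q. joint_dist q \<and> state_consistent pA pB q \<and> entangled q
              \<longrightarrow> expected_payoff pay q \<le> expected_payoff pay p"
  shows "\<exists>q. joint_dist q \<and> state_consistent pA pB q \<and> classically_generated q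
              \<and> expected_payoff pay q = expected_payoff pay p"
proof -
  have pA: "prob_dist pA" and pB: "\<forall>g. pB g > 0" and sc: "state_consistent pA pB p"
    and jd: "joint_dist p" and dj: "disjoint_dist p"
    using assms by (auto simp: entangled_def)
  have nn: "\<forall>s t f g. 0 \<le> p s t f g" using jd by (simp add: joint_dist_def)
  have sumB: "(\<Sum>g\<in>UNIV. pB g) = 1" using assms(3) by (simp add: prob_dist_def)
  have sumA: "(\<Sum>f\<in>UNIV. pA f) = 1" using assms(1) by (simp add: prob_dist_def)
  define P where "P s t f = (\<Sum>g\<in>UNIV. p s t f g)" for s t f
  define pT where "pT t = (\<Sum>s\<in>UNIV. \<Sum>f\<in>UNIV. \<Sum>g\<in>UNIV. p s t f g)" for t
  define q where "q s t f g = P s t f * pB g" for s t f g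
  have indep: "(\<Sum>s\<in>UNIV. P s t f) = pA f * pT t" for t f
    using t_phi_indep[OF pA pB nn sc dj] unfolding P_def pT_def by simp
  have Pnn: "0 \<le> P s t f" for s t f unfolding P_def using nn by (simp add: sum_nonneg)
  have qnn: "0 \<le> q s t f g" for s t f g unfolding q_def using Pnn pB
    by (simp add: less_imp_le)
  have Pst: "(\<Sum>s\<in>UNIV. \<Sum>t\<in>UNIV. P s t f) = pA f" for f
  proof -
    have "(\<Sum>s\<in>UNIV. \<Sum>t\<in>UNIV. P s t f) = (\<Sum>g\<in>UNIV. \<Sum>s\<in>UNIV. \<Sum>t\<in>UNIV. p s t f g)"
      unfolding P_def by (rule sum_rot3)
    also have "\<dots> = (\<Sum>g\<in>UNIV. pA f * pB g)" using sc by (simp add: state_consistent_def)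
    also have "\<dots> = pA f" using sumB by (simp add: sum_distrib_left[symmetric])
    finally show ?thesis .
  qed
  have scq: "state_consistent pA pB q"
    unfolding state_consistent_def q_def
    by (simp add: sum_distrib_right[symmetric] Pst)
  have jdq: "joint_dist q"
    unfolding joint_dist_def
  proof (intro conjI allI)
    show "0 \<le> q s t f g" for s t f g by (rule qnn)
    have "(\<Sum>s\<in>UNIV. \<Sum>t\<in>UNIV. \<Sum>f\<in>UNIV. \<Sum>g\<in>UNIV. q s t f g)
        = (\<Sum>s\<in>UNIV. \<Sum>t\<in>UNIV. \<Sum>f\<in>UNIV. P s t f)"
      unfolding q_def by (simp add: sum_if_const sum_distrib_left[symmetric] sumB)
    also have "\<dots> = 1" using jd unfolding P_def joint_dist_def by simp
    finally show "(\<Sum>s\<in>UNIV. \<Sum>t\<in>UNIV. \<Sum>f\<in>UNIV. \<Sum>g\<in>UNIV. q s t f g) = 1" .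
  qed
  have payq: "expected_payoff pay q = expected_payoff pay p"
  proof -
    have "expected_payoff pay q = (\<Sum>s\<in>UNIV. \<Sum>t\<in>UNIV. \<Sum>f\<in>UNIV. pay s t f * P s t f)"
      unfolding expected_payoff_def q_def
      by (simp add: mult.assoc[symmetric] sum_distrib_left[symmetric] sumB)
    also have "\<dots> = expected_payoff pay p"
      unfolding expected_payoff_def P_def by (simp add: sum_distrib_left)
    finally show ?thesis .
  qed
  obtain e :: "'t \<Rightarrow> nat" and n where en: "e ` UNIV = {i. i < n}" and einj: "inj e"
    using finite_imp_inj_to_nat_seg[of "UNIV :: 't set"] by auto
  have elt: "e t < n" for t using en by auto
  define r where "r x s t f g = (if x = e t then q s t f g else 0)" for x s t f g
  have cg: "classically_generated q"
    unfolding classically_generated_def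
  proof (intro exI[of _ n] exI[of _ r] conjI allI impI)
    show "0 \<le> r x s t f g" for x s t f g unfolding r_def using qnn by simp
    show "r x s t f g = 0" if "n \<le> x" for x s t f g
      unfolding r_def using elt[of t] that by auto
    show "q s t f g = (\<Sum>x<n. r x s t f g)" for s t f g
      unfolding r_def using elt[of t] by simp
    show "marg_phi_psi (r x) f g =
      (\<Sum>s\<in>UNIV. \<Sum>t\<in>UNIV. \<Sum>f'\<in>UNIV. \<Sum>g'\<in>UNIV. r x s t f' g') * marg_phi_psi q f g" for x f g
    proof (cases "x \<in> range e")
      case True
      then obtain t0 where x: "x = e t0" by auto
      have rx: "r x s t f g = (if t = t0 then q s t0 f g else 0)" for s t f g
        unfolding r_def x using einj by (auto dest: injD)
      have m1: "marg_phi_psi q f g = pA f * pB g" using scq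
        by (simp add: marg_phi_psi_def state_consistent_def)
      have "(\<Sum>s\<in>UNIV. \<Sum>t\<in>UNIV. \<Sum>f'\<in>UNIV. \<Sum>g'\<in>UNIV. r x s t f' g')
          = (\<Sum>s\<in>UNIV. \<Sum>f'\<in>UNIV. P s t0 f')"
        unfolding rx q_def by (simp add: sum_if_const sum_distrib_left[symmetric] sumB)
      also have "\<dots> = (\<Sum>f'\<in>UNIV. \<Sum>s\<in>UNIV. P s t0 f')" by (rule sum.swap)
      also have "\<dots> = pT t0" by (simp add: indep sum_distrib_right[symmetric] sumA)
      finally have tot: "(\<Sum>s\<in>UNIV. \<Sum>t\<in>UNIV. \<Sum>f'\<in>UNIV. \<Sum>g'\<in>UNIV. r x s t f' g') = pT t0" .
      have "marg_phi_psi (r x) f g = (\<Sum>s\<in>UNIV. P s t0 f) * pB g"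
        unfolding marg_phi_psi_def rx q_def by (simp add: sum_distrib_right)
      then show ?thesis using tot m1 indep by simp
    next
      case False
      then have "r x s t f g = 0" for s t f g unfolding r_def by auto
      then show ?thesis by (simp add: marg_phi_psi_def)
    qed
    show "r x s t f g / marg_phi_psi (r x) f g =
           (marg_s_phi (r x) s f / marg_phi (r x) f) * (marg_t_psi (r x) t g / marg_psi (r x) g)"
      if M: "marg_phi_psi (r x) f g > 0" for x s t f g
    proof (cases "x \<in> range e")
      case True
      then obtain t0 where x: "x = e t0" by auto
      have rx: "r x s t f g = (if t = t0 then q s t0 f g else 0)" for s t f g
        unfolding r_def x using einj by (auto dest: injD)
      have mpp: "marg_phi_psi (r x) f g = pA f * pT t0 * pB g"
        unfolding marg_phi_psi_def rx q_def by (simp add: sum_if_const sum_distrib_right[symmetric] indep)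
      have ms: "marg_s_phi (r x) s f = P s t0 f"
        unfolding marg_s_phi_def rx q_def by (simp add: sum_if_const sum_distrib_left[symmetric] sumB)
      have mp: "marg_phi (r x) f = pA f * pT t0"
        unfolding marg_phi_def rx q_def
        by (simp add: sum_if_const sum_distrib_left[symmetric] sumB indep)
      have mt: "marg_t_psi (r x) t g = (if t = t0 then pT t0 * pB g else 0)"
      proof -
        have "marg_t_psi (r x) t g = (if t = t0 then (\<Sum>s\<in>UNIV. \<Sum>f\<in>UNIV. P s t0 f) * pB g else 0)"
          unfolding marg_t_psi_def rx q_def by (simp add: sum_distrib_right)
        also have "(\<Sum>s\<in>UNIV. \<Sum>f\<in>UNIV. P s t0 f) = pT t0"
          by (subst sum.swap) (simp add: indep sum_distrib_right[symmetric] sumA)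
        finally show ?thesis .
      qed
      have mpsi: "marg_psi (r x) g = pT t0 * pB g"
      proof -
        have "marg_psi (r x) g = (\<Sum>s\<in>UNIV. \<Sum>f\<in>UNIV. P s t0 f) * pB g"
          unfolding marg_psi_def rx q_def by (simp add: sum_if_const sum_distrib_right)
        also have "(\<Sum>s\<in>UNIV. \<Sum>f\<in>UNIV. P s t0 f) = pT t0"
          by (subst sum.swap) (simp add: indep sum_distrib_right[symmetric] sumA)
        finally show ?thesis .
      qed
      have nz: "pA f \<noteq> 0" "pT t0 \<noteq> 0" "pB g \<noteq> 0" using M mpp by auto
      show ?thesis
        using nz unfolding mpp ms mp mt mpsi rx q_def by (auto simp: field_simps)
    next
      case False
      then have "r x s t f g = 0" for s t f g unfolding r_def by auto
      then show ?thesis using M by (simp add: marg_phi_psi_def)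
    qed
  qed
  show ?thesis using jdq scq cg payq by blast
qed

end
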